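(* Let $w \in \mathbb{R}^n$ with $w_j > 0$ for all $j$, and let $x \in \mathbb{R}^n$ with $x_j > 0$ for $2 \le j \le n$. Then \[ \min_{z \in \Omega_1} \|x - z\| = \min_{t \in [x_1^+,\,1]} \|x - \phi_t(x)\|. \] Moreover, if $z^* = \arg\min_{z \in \Omega_1} \|x - z\|$, then for $2 \le j \le n$: $w_1 z^*_j < w_j z^*_1$ if $w_1 x_j < w_j z^*_1$, and $w_1 z^*_j = w_j z^*_1$ if $w_1 x_j \ge w_j z^*_1$.
   Context: $\|\cdot\|$ is the Euclidean norm on $\mathbb{R}^n$. $\Omega_1 := \{ z \in \mathbb{R}^n_+ : z_1 \le 1,\ w_1 z_j \le w_j z_1 \text{ for } 2 \le j \le n\}$. For $t \in \mathbb{R}$, $\phi_t : \mathbb{R}^n \to \mathbb{R}^n$ is defined by $\phi_t(x)_1 = t$, and for $j \ne 1$: $\phi_t(x)_j = \frac{w_j}{w_1} t$ if $\frac{w_1}{w_j} x_j \ge t$, and $\phi_t(x)_j = x_j$ otherwise. $x_1^+ := \min\{1, \max\{0, x_1\}\}$. *)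

theory Defs
  imports "HOL-Analysis.Analysis"
begin

text \<open>Vectors in R^n are modelled as real^'n; the distinguished first coordinate
  (index 1 in the paper) is an arbitrary fixed index i1 :: 'n, the other
  coordinates j \<noteq> i1 play the role of 2 \<le> j \<le> n.\<close>

definition Omega1 :: "real^'n \<Rightarrow> 'n \<Rightarrow> (real^'n) set" where
  "Omega1 w i1 = {z. (\<forall>j. 0 \<le> z $ j) \<and> z $ i1 \<le> 1 \<and>
                      (\<forall>j. j \<noteq> i1 \<longrightarrow> w $ i1 * z $ j \<le> w $ j * z $ i1)}"

definition phi :: "real^'n \<Rightarrow> 'n \<Rightarrow> real \<Rightarrow> real^'n \<Rightarrow> real^'n" where
  "phi w i1 t x = (\<chi> j. if j = i1 then t
                         else if (w $ i1 / w $ j) * x $ j \<ge> t then (w $ j / w $ i1) * t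
                         else x $ j)"

definition clip01 :: "real \<Rightarrow> real" where
  "clip01 a = min 1 (max 0 a)"

end

theory Submission
  imports Defs
begin

lemma norm_lt_comp:
  fixes a b :: "real^'n"
  assumes "\<And>i. \<bar>a$i\<bar> \<le> \<bar>b$i\<bar>" "\<bar>a$j\<bar> < \<bar>b$j\<bar>"
  shows "norm a < norm b"
proof -
  have "(\<Sum>i\<in>UNIV. (a$i)^2) < (\<Sum>i\<in>UNIV. (b$i)^2)"
  proof (rule sum_strict_mono_ex1)
    show "\<forall>i\<in>UNIV. (a$i)^2 \<le> (b$i)^2" using assms(1) abs_le_square_iff by blast
    have "\<not> (b$j)^2 \<le> (a$j)^2" using assms(2) abs_le_square_iff[of "b$j" "a$j"] by linarith
    then show "\<exists>i\<in>UNIV. (a$i)^2 < (b$i)^2" by (auto simp: not_le)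
  qed simp
  then show ?thesis by (simp add: norm_vec_def L2_set_def)
qed

lemma phi_i1: "phi w i1 t x $ i1 = t"
  by (simp add: phi_def)

lemma phi_comp:
  assumes wpos: "\<forall>j. w $ j > 0" and j: "j \<noteq> i1"
  shows "phi w i1 t x $ j = min (x$j) (w$j/w$i1*t)"
proof -
  have a: "w$j > 0" "w$i1 > 0" using wpos by auto
  have "(w$i1/w$j)*x$j \<ge> t \<longleftrightarrow> w$j/w$i1*t \<le> x$j"
    using a by (simp add: field_simps)
  then show ?thesis using j by (auto simp: phi_def min_def)
qed

lemma phi_in:
  assumes wpos: "\<forall>j. w $ j > 0" and xpos: "\<forall>j. j \<noteq> i1 \<longrightarrow> x $ j > 0"
    and t: "0 \<le> t" "t \<le> 1"
  shows "phi w i1 t x \<in> Omega1 w i1"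
  unfolding Omega1_def
proof (intro CollectI conjI allI impI)
  fix j
  show "0 \<le> phi w i1 t x $ j"
  proof (cases "j = i1")
    case True then show ?thesis using t by (simp add: phi_i1)
  next
    case False
    have "0 \<le> w$j/w$i1*t" using wpos t by (simp add: less_imp_le)
    then show ?thesis using False phi_comp[OF wpos False] xpos by (simp add: less_imp_le)
  qed
next
  show "phi w i1 t x $ i1 \<le> 1" using t by (simp add: phi_i1)
next
  fix j assume j: "j \<noteq> i1"
  have a: "w$j > 0" "w$i1 > 0" using wpos by auto
  have m: "min (x$j) (w$j/w$i1*t) \<le> w$j/w$i1*t" by simp
  have "w$i1 * min (x$j) (w$j/w$i1*t) \<le> w$j * t"
    using mult_left_mono[OF m, of "w$i1"] a by simp
  then show "w $ i1 * phi w i1 t x $ j \<le> w $ j * phi w i1 t x $ i1"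
    using phi_comp[OF wpos j] by (simp add: phi_i1)
qed

lemma comp_le:
  assumes wpos: "\<forall>j. w $ j > 0" and z: "z \<in> Omega1 w i1" and j: "j \<noteq> i1"
  shows "\<bar>x$j - phi w i1 (z$i1) x $ j\<bar> \<le> \<bar>x$j - z$j\<bar>
       \<and> (z$j \<noteq> phi w i1 (z$i1) x $ j \<longrightarrow> \<bar>x$j - phi w i1 (z$i1) x $ j\<bar> < \<bar>x$j - z$j\<bar>)"
proof -
  have a: "w$j > 0" "w$i1 > 0" using wpos by auto
  have z0: "0 \<le> z$j" and zb0: "w$i1 * z$j \<le> w$j * z$i1" using z j by (auto simp: Omega1_def)
  have zb: "z$j \<le> w$j/w$i1 * z$i1" using zb0 a by (simp add: field_simps)
  show ?thesis using zb z0 phi_comp[OF wpos j, of "z$i1" x] by (auto simp: min_def)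
qed

lemma mono_comp:
  assumes wpos: "\<forall>j. w $ j > 0" and j: "j \<noteq> i1" and st: "s \<le> t"
  shows "\<bar>x$j - phi w i1 t x $ j\<bar> \<le> \<bar>x$j - phi w i1 s x $ j\<bar>"
proof -
  have a: "w$j/w$i1 > 0" using wpos by auto
  have "(w $ j / w $ i1) * s \<le> (w $ j / w $ i1) * t" using a st by (intro mult_left_mono) auto
  then show ?thesis using phi_comp[OF wpos j] by (auto simp: min_def)
qed

lemma INF_min:
  fixes f :: "'a \<Rightarrow> real"
  assumes "a \<in> S" "\<forall>y\<in>S. f a \<le> f y"
  shows "(INF y\<in>S. f y) = f a"
  using assms by (intro cInf_eq_minimum) auto

theorem mainTheorem3:
  fixes w x :: "real^'n" and i1 :: 'n
  assumes wpos: "\<forall>j. w $ j > 0"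
    and xpos: "\<forall>j. j \<noteq> i1 \<longrightarrow> x $ j > 0"
  shows "(\<exists>z\<in>Omega1 w i1. \<forall>z'\<in>Omega1 w i1. norm (x - z) \<le> norm (x - z'))
       \<and> (\<exists>t\<in>{clip01 (x $ i1)..1}. \<forall>t'\<in>{clip01 (x $ i1)..1}.
             norm (x - phi w i1 t x) \<le> norm (x - phi w i1 t' x))
       \<and> (INF z\<in>Omega1 w i1. norm (x - z)) = (INF t\<in>{clip01 (x $ i1)..1}. norm (x - phi w i1 t x))
       \<and> (\<forall>zs\<in>Omega1 w i1. (\<forall>z\<in>Omega1 w i1. norm (x - zs) \<le> norm (x - z)) \<longrightarrow>
            (\<forall>j. j \<noteq> i1 \<longrightarrow>
               (w $ i1 * x $ j < w $ j * zs $ i1 \<longrightarrow> w $ i1 * zs $ j < w $ j * zs $ i1) \<and>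
               (w $ i1 * x $ j \<ge> w $ j * zs $ i1 \<longrightarrow> w $ i1 * zs $ j = w $ j * zs $ i1)))"
proof -
  define c where "c = clip01 (x $ i1)"
  have c01: "0 \<le> c" "c \<le> 1" by (auto simp: c_def clip01_def)
  have inO: "phi w i1 t x \<in> Omega1 w i1" if "0 \<le> t" "t \<le> 1" for t
    using phi_in[OF wpos xpos that] .
  have zO: "0 \<le> z$i1" "z$i1 \<le> 1" if "z \<in> Omega1 w i1" for z
    using that by (auto simp: Omega1_def)
  have step1: "norm (x - phi w i1 (z$i1) x) \<le> norm (x - z)" if z: "z \<in> Omega1 w i1" for z
  proof (rule norm_le_componentwise_cart)
    fix i show "norm ((x - phi w i1 (z$i1) x) $ i) \<le> norm ((x - z) $ i)"
      using comp_le[OF wpos z, of i x] by (cases "i = i1") (auto simp: phi_i1)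
  qed
  have step2: "norm (x - phi w i1 (max (z$i1) c) x) \<le> norm (x - phi w i1 (z$i1) x)"
    if z: "z \<in> Omega1 w i1" for z
  proof (rule norm_le_componentwise_cart)
    fix i show "norm ((x - phi w i1 (max (z$i1) c) x) $ i) \<le> norm ((x - phi w i1 (z$i1) x) $ i)"
    proof (cases "i = i1")
      case True
      have "\<bar>x$i1 - max (z$i1) c\<bar> \<le> \<bar>x$i1 - z$i1\<bar>"
        using zO[OF z] by (auto simp: c_def clip01_def min_def max_def)
      then show ?thesis using True by (simp add: phi_i1)
    next
      case False then show ?thesis using mono_comp[OF wpos False, of "z$i1" "max (z$i1) c" x] by simp
    qed
  qed
  have ne: "Omega1 w i1 \<noteq> {}" using inO[of 0] by auto
  have cl: "closed (Omega1 w i1)"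
  proof -
    have e: "Omega1 w i1 = (\<Inter>j. {z. 0 \<le> z $ j}) \<inter> {z. z $ i1 \<le> 1} \<inter>
       (\<Inter>j\<in>-{i1}. {z. w $ i1 * z $ j \<le> w $ j * z $ i1})"
      by (auto simp: Omega1_def)
    show ?thesis unfolding e
      by (intro closed_Int closed_INT ballI closed_Collect_le continuous_intros)
  qed
  obtain zs where zs: "zs \<in> Omega1 w i1" "\<And>y. y \<in> Omega1 w i1 \<Longrightarrow> dist x zs \<le> dist x y"
    using distance_attains_inf[OF cl ne] by blast
  have zsmin: "\<forall>z'\<in>Omega1 w i1. norm (x - zs) \<le> norm (x - z')"
    using zs(2) by (simp add: dist_norm)
  define t0 where "t0 = max (zs$i1) c"
  have t0: "t0 \<in> {c..1}" using zO[OF zs(1)] c01 by (auto simp: t0_def)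
  have ft0: "norm (x - phi w i1 t0 x) \<le> norm (x - zs)"
    using step1[OF zs(1)] step2[OF zs(1)] unfolding t0_def by linarith
  have tmin: "\<forall>t'\<in>{c..1}. norm (x - phi w i1 t0 x) \<le> norm (x - phi w i1 t' x)"
  proof
    fix t' assume "t' \<in> {c..1}"
    then have "phi w i1 t' x \<in> Omega1 w i1" using c01 by (intro inO) auto
    then show "norm (x - phi w i1 t0 x) \<le> norm (x - phi w i1 t' x)" using ft0 zsmin by force
  qed
  have eqv: "norm (x - phi w i1 t0 x) = norm (x - zs)"
    using ft0 zsmin inO[of t0] t0 c01 by force
  have P3: "(INF z\<in>Omega1 w i1. norm (x - z)) = (INF t\<in>{c..1}. norm (x - phi w i1 t x))"
    using INF_min[of zs "Omega1 w i1" "\<lambda>z. norm (x - z)", OF zs(1) zsmin]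
      INF_min[of t0 "{c..1}" "\<lambda>t. norm (x - phi w i1 t x)", OF t0 tmin] eqv by simp
  have P4: "(w $ i1 * x $ j < w $ j * z $ i1 \<longrightarrow> w $ i1 * z $ j < w $ j * z $ i1) \<and>
            (w $ i1 * x $ j \<ge> w $ j * z $ i1 \<longrightarrow> w $ i1 * z $ j = w $ j * z $ i1)"
    if z: "z \<in> Omega1 w i1" and zm: "\<forall>z'\<in>Omega1 w i1. norm (x - z) \<le> norm (x - z')"
      and j: "j \<noteq> i1" for z j
  proof -
    have a: "w$j > 0" "w$i1 > 0" using wpos by auto
    have eq: "z$j = phi w i1 (z$i1) x $ j"
    proof (rule ccontr)
      assume ne: "z$j \<noteq> phi w i1 (z$i1) x $ j"
      have "norm (x - phi w i1 (z$i1) x) < norm (x - z)"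
      proof (rule norm_lt_comp[where j=j])
        fix i show "\<bar>(x - phi w i1 (z$i1) x) $ i\<bar> \<le> \<bar>(x - z) $ i\<bar>"
          using comp_le[OF wpos z, of i x] by (cases "i = i1") (auto simp: phi_i1)
      next
        show "\<bar>(x - phi w i1 (z$i1) x) $ j\<bar> < \<bar>(x - z) $ j\<bar>"
          using comp_le[OF wpos z j, of x] ne by simp
      qed
      moreover have "phi w i1 (z$i1) x \<in> Omega1 w i1" using inO zO[OF z] by blast
      ultimately show False using zm by force
    qed
    then have zj: "z$j = min (x$j) (w$j/w$i1*z$i1)" using phi_comp[OF wpos j] by simp
    have e1: "w$i1 * x$j < w$j * z$i1 \<longleftrightarrow> x$j < w$j/w$i1*z$i1" using a by (simp add: field_simps)
    have e2: "w$i1 * (w$j/w$i1*z$i1) = w$j * z$i1" using a by simp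
    show ?thesis using zj e1 e2 by (auto simp: min_def)
  qed
  show ?thesis
    using zs(1) zsmin t0 tmin P3 P4 unfolding c_def by blast
qed

end
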